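(* Let $0\le r\le n$, $A\in\mathcal{A}_{n+1,r+1}$, and fix a tiling of $\Gamma(X(A))$. At any stage of the fusion-exchange algorithm applied to $A$, if an edge $e$ carries a nonempty label $L$ and $x=L_{\max}$, then $e$ lies in the $x$-strip.
   Context: Words and diagrams. For $0\le r\le n$ let $B_n^r$ be the set of words $X\in\{H,L,0\}^n$ with exactly $r$ letters $L$. If $X$ has $k$ letters $H$, $r$ letters $L$ and $\ell$ letters $0$, its rhombic diagram $\Gamma(X)$ is the closed region bounded by two paths of unit steps, using the directions west (horizontal), south (vertical) and southwest (diagonal: a fixed unit vector strictly between west and south), both going from a point $P$ to a point $Q$: the northwest boundary consists of $\ell$ west steps, then $r$ southwest steps, then $k$ south steps; the southeast boundary is obtained by reading $X$ left to right and taking a west step for each $0$, a southwest step for each $L$, a south step for each $H$. A tiling of $\Gamma(X)$ is a tiling by unit rhombi of three kinds: squares (horizontal and vertical edges), tall rhombi (vertical and diagonal edges), short rhombi (horizontal and diagonal edges). A west-strip (resp. north-strip, northwest-strip) is a maximal set of tiles connected through shared vertical (resp. horizontal, diagonal) edges; each runs from an edge of the southeast boundary to an edge of the northwest boundary, and each edge of the tiling lies in exactly one strip, of the type of its direction. Each tile has two edges on its lower-right side: its east edge (vertical for squares and tall rhombi, diagonal for short rhombi) and its south edge (horizontal for squares and short rhombi, diagonal for tall rhombi); the parallel edges on its upper-left side are its west and north edges. Assemblées. An assemblée of size $(m,s)$ is a collection of $s$ nonempty, pairwise disjoint, linearly ordered sets (blocks) with union $\{1,\dots,m\}$; the last element of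 a block is its block-end. Blocks are listed in the canonical order with decreasing block-ends, and the assemblée is identified with the concatenated word. $\mathcal{A}_{m,s}$ is the set of these. For $A\in\mathcal{A}_{n+1,r+1}$ with block-ends $b_1>\dots>b_{r+1}$, a non-block-end element $x$ is an increase if $x+1$ appears to the right of $x$ in $A$, and a decrease otherwise (so $n+1$, if not a block-end, is a decrease). $X(A)\in B_n^r$ is obtained from $A$ by deleting its last letter $b_{r+1}$ and replacing each increase by $H$, each decrease by $0$ and each remaining block-end by $L$. Fusion-exchange algorithm. A label is a finite, possibly empty, set of consecutive integers; for a nonempty label $L$, $L_{\max}$ is its largest element; for labels $E,S$ write $E\succ S$ if both are nonempty and $\min E=\max S+1$. Given $A\in\mathcal{A}_{n+1,r+1}$ and a tiling of $\Gamma(X(A))$: initially the southeast boundary edges, in order from $P$ to $Q$, receive the singleton labels of the letters of $A$ from left to right, $b_{r+1}$ omitted. Step: choose a tile whose east and south edges are labeled, say by $E$ and $S$, and whose west and north edges are not. (R I) If $E\succ S$ and the south edge is horizontal: west edge gets $E\cup S$, north edge gets $\emptyset$, place $\alpha$ in the tile. (R II) If $S\succ E$ and the east edge is vertical: north edge gets $E\cup S$, west edge gets $\emptyset$, place $\beta$. (R III) Otherwise: west edge gets $E$, north edge gets $S$, and place $q$ if $E\ne\emptyset$ and $S\ne\emptyset$. Repeat until every edge is labeled. For a letter $x\neq b_{r+1}$ of $A$, the $x$-strip is the strip containing the southeast boundary edge initially labeled $\{x\}$. *)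

theory Defs
  imports Main
begin

text \<open>An assemblee of size (m,s) is represented by its list of blocks in canonical
order (decreasing block-ends); each block is a nonempty list (its linear order).
The concatenated word is concat A.\<close>

definition assemblee :: "nat \<Rightarrow> nat \<Rightarrow> nat list list \<Rightarrow> bool" where
  "assemblee m s A \<longleftrightarrow>
     length A = s \<and> (\<forall>B\<in>set A. B \<noteq> []) \<and>
     distinct (concat A) \<and> set (concat A) = {1..m} \<and>
     sorted_wrt (>) (map last A)"

definition block_ends :: "nat list list \<Rightarrow> nat set" where
  "block_ends A = set (map last A)"

text \<open>Step directions: west (letter 0), southwest/diagonal (letter L), south (letter H).\<close>
datatype dir = dW | dSW | dS

text \<open>The word X(A), with letters encoded as directions (0 = dW, L = dSW, H = dS).
Position i < n carries the letter (concat A ! i).\<close>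
definition Xword :: "nat list list \<Rightarrow> dir list" where
  "Xword A = (let w = concat A in
     map (\<lambda>i. if w ! i \<in> block_ends A then dSW
               else if (\<exists>j. i < j \<and> j < length w \<and> w ! j = w ! i + 1) then dS
               else dW) [0..<length w - 1])"

definition nw_word :: "dir list \<Rightarrow> dir list" where
  "nw_word X = replicate (count_list X dW) dW @ replicate (count_list X dSW) dSW
              @ replicate (count_list X dS) dS"

text \<open>Vertices are recorded by the numbers of west, southwest and south unit steps
needed to reach them from P (for a generic diagonal vector this determines the
planar point uniquely).\<close>
type_synonym vertex = "nat \<times> nat \<times> nat"

definition pos :: "dir list \<Rightarrow> vertex" where
  "pos w = (count_list w dW, count_list w dSW, count_list w dS)"

fun mv :: "vertex \<Rightarrow> dir \<Rightarrow> vertex" where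
  "mv (i,j,k) dW = (Suc i, j, k)"
| "mv (i,j,k) dSW = (i, Suc j, k)"
| "mv (i,j,k) dS = (i, j, Suc k)"

text \<open>An edge is given by its endpoint nearer to P and its direction.\<close>
type_synonym edge = "vertex \<times> dir"

definition path_edge :: "dir list \<Rightarrow> nat \<Rightarrow> edge" where
  "path_edge w i = (pos (take i w), w ! i)"

text \<open>A tile is given by its corner nearest P and the directions (a,b) of its
lower-right side read from that corner: east edge in direction a, then south edge
in direction b. Squares: (dS,dW); tall rhombi: (dS,dSW); short rhombi: (dSW,dW).\<close>
type_synonym tile = "vertex \<times> dir \<times> dir"

definition tile_types :: "(dir \<times> dir) set" where
  "tile_types = {(dS,dW), (dS,dSW), (dSW,dW)}"

definition east_edge :: "tile \<Rightarrow> edge" where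
  "east_edge t = (case t of (v,a,b) \<Rightarrow> (v, a))"
definition south_edge :: "tile \<Rightarrow> edge" where
  "south_edge t = (case t of (v,a,b) \<Rightarrow> (mv v a, b))"
definition north_edge :: "tile \<Rightarrow> edge" where
  "north_edge t = (case t of (v,a,b) \<Rightarrow> (v, b))"
definition west_edge :: "tile \<Rightarrow> edge" where
  "west_edge t = (case t of (v,a,b) \<Rightarrow> (mv v b, a))"

text \<open>Elementary move: a boundary path w passing along the lower-right side of tile t
is replaced by the path passing along its upper-left side.\<close>
definition flip :: "dir list \<Rightarrow> dir list \<Rightarrow> tile \<Rightarrow> bool" where
  "flip w w' t \<longleftrightarrow> (\<exists>i a b. (a,b) \<in> tile_types \<and> Suc i < length w \<and>
      w ! i = a \<and> w ! Suc i = b \<and> w' = w[i := b, Suc i := a] \<and>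
      t = (pos (take i w), a, b))"

text \<open>A (rhombus) tiling of Gamma(X): a set of tiles which can be placed one by one,
starting from the southeast boundary and ending at the northwest boundary.\<close>
definition is_tiling :: "dir list \<Rightarrow> tile set \<Rightarrow> bool" where
  "is_tiling X T \<longleftrightarrow> (\<exists>ws ts. length ws = Suc (length ts) \<and> ws ! 0 = X \<and>
      last ws = nw_word X \<and> (\<forall>i < length ts. flip (ws ! i) (ws ! Suc i) (ts ! i)) \<and>
      distinct ts \<and> T = set ts)"

definition strip_adj :: "tile set \<Rightarrow> edge \<Rightarrow> edge \<Rightarrow> bool" where
  "strip_adj T e e' \<longleftrightarrow> (\<exists>t\<in>T. {e, e'} = {east_edge t, west_edge t} \<or>
                                  {e, e'} = {south_edge t, north_edge t})"

definition same_strip :: "tile set \<Rightarrow> edge \<Rightarrow> edge \<Rightarrow> bool" where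
  "same_strip T = (strip_adj T)\<^sup>*\<^sup>*"

type_synonym label = "nat set"

definition lsucc :: "label \<Rightarrow> label \<Rightarrow> bool" where
  "lsucc E S \<longleftrightarrow> E \<noteq> {} \<and> S \<noteq> {} \<and> Min E = Max S + 1"

definition init_lab :: "nat list list \<Rightarrow> edge \<Rightarrow> label option" where
  "init_lab A = map_of (map (\<lambda>i. (path_edge (Xword A) i, {concat A ! i}))
                            [0..<length (Xword A)])"

definition fe_step :: "tile set \<Rightarrow> (edge \<Rightarrow> label option) \<Rightarrow> (edge \<Rightarrow> label option) \<Rightarrow> bool" where
  "fe_step T lab lab' \<longleftrightarrow> (\<exists>t\<in>T. \<exists>E S.
     lab (east_edge t) = Some E \<and> lab (south_edge t) = Some S \<and>
     lab (west_edge t) = None \<and> lab (north_edge t) = None \<and>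
     lab' = (if lsucc E S \<and> snd (snd t) = dW
               then lab(west_edge t := Some (E \<union> S), north_edge t := Some {})
             else if lsucc S E \<and> fst (snd t) = dS
               then lab(north_edge t := Some (E \<union> S), west_edge t := Some {})
             else lab(west_edge t := Some E, north_edge t := Some S)))"

end

theory Submission
  imports Defs
begin

definition Qinv :: "nat \<Rightarrow> nat list list \<Rightarrow> tile set \<Rightarrow> edge \<Rightarrow> label \<Rightarrow> bool" where
  "Qinv n A T e L \<longleftrightarrow> finite L \<and> (L \<noteq> {} \<longrightarrow>
     (\<exists>i < n. concat A ! i = Max L \<and> same_strip T (path_edge (Xword A) i) e))"

lemma Qinv_adj:
  assumes "Qinv n A T e L" "strip_adj T e e'"
  shows "Qinv n A T e' L"
  using assms unfolding Qinv_def same_strip_def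
  by (meson rtranclp.rtrancl_into_rtrancl)

lemma Qinv_empty: "Qinv n A T e {}"
  by (simp add: Qinv_def)

lemma Qinv_union1:
  assumes "Qinv n A T e E" "Qinv n A T e2 S" "lsucc E S"
  shows "Qinv n A T e (E \<union> S)"
proof -
  have f: "finite E" "finite S" using assms unfolding Qinv_def by auto
  have ne: "E \<noteq> {}" "S \<noteq> {}" using assms(3) unfolding lsucc_def by auto
  have "Max S < Min E" using assms(3) unfolding lsucc_def by auto
  moreover have "Min E \<le> Max E" using f ne by simp
  ultimately have "Max (E \<union> S) = Max E" using f ne by (simp add: Max_Un)
  thus ?thesis using assms(1) f ne unfolding Qinv_def by auto
qed

lemma Qinv_union2:
  assumes "Qinv n A T e E" "Qinv n A T e2 S" "lsucc S E"
  shows "Qinv n A T e2 (E \<union> S)"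
  using Qinv_union1[OF assms(2) assms(1) assms(3)] by (simp add: Un_commute)

lemma adj_ew: "t \<in> T \<Longrightarrow> strip_adj T (east_edge t) (west_edge t)"
  unfolding strip_adj_def by blast
lemma adj_sn: "t \<in> T \<Longrightarrow> strip_adj T (south_edge t) (north_edge t)"
  unfolding strip_adj_def by blast

lemma step_inv:
  assumes inv: "\<forall>e L. lab e = Some L \<longrightarrow> Qinv n A T e L"
    and st: "fe_step T lab lab'"
  shows "\<forall>e L. lab' e = Some L \<longrightarrow> Qinv n A T e L"
proof -
  obtain t E S where t: "t \<in> T" and hE: "lab (east_edge t) = Some E"
    and hS: "lab (south_edge t) = Some S"
    and l': "lab' = (if lsucc E S \<and> snd (snd t) = dW
               then lab(west_edge t := Some (E \<union> S), north_edge t := Some {})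
             else if lsucc S E \<and> fst (snd t) = dS
               then lab(north_edge t := Some (E \<union> S), west_edge t := Some {})
             else lab(west_edge t := Some E, north_edge t := Some S))"
    using st unfolding fe_step_def by blast
  have qE: "Qinv n A T (east_edge t) E" using inv hE by blast
  have qS: "Qinv n A T (south_edge t) S" using inv hS by blast
  have qEw: "Qinv n A T (west_edge t) E" using Qinv_adj[OF qE adj_ew[OF t]] .
  have qSn: "Qinv n A T (north_edge t) S" using Qinv_adj[OF qS adj_sn[OF t]] .
  show ?thesis
  proof (intro allI impI)
    fix e L assume h: "lab' e = Some L"
    show "Qinv n A T e L"
    proof (cases "lsucc E S \<and> snd (snd t) = dW")
      case True
      have "Qinv n A T (west_edge t) (E \<union> S)"
        using Qinv_union1[OF qEw qSn] True by blast
      then show ?thesis using h l' True inv Qinv_empty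
        by (cases "e = north_edge t"; cases "e = west_edge t"; simp add: inv[rule_format, of e L])
    next
      case F1: False
      show ?thesis
      proof (cases "lsucc S E \<and> fst (snd t) = dS")
        case True
        have "Qinv n A T (north_edge t) (E \<union> S)"
          using Qinv_union2[OF qEw qSn] True by blast
        then show ?thesis using h l' True F1 inv Qinv_empty
          by (cases "e = north_edge t"; cases "e = west_edge t"; simp add: inv[rule_format, of e L])
      next
        case False
        then show ?thesis using h l' F1 inv qEw qSn
          by (cases "e = north_edge t"; cases "e = west_edge t"; simp add: inv[rule_format, of e L])
      qed
    qed
  qed
qed

lemma len_concat:
  assumes "assemblee (Suc n) (Suc r) A"
  shows "length (concat A) = Suc n"
proof -
  have "distinct (concat A)" "set (concat A) = {1..Suc n}"
    using assms unfolding assemblee_def by auto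
  then have "card (set (concat A)) = length (concat A)" by (metis distinct_card)
  moreover have "card {1..Suc n} = Suc n" by simp
  ultimately show ?thesis using \<open>set (concat A) = {1..Suc n}\<close> by metis
qed

lemma init_inv:
  assumes "assemblee (Suc n) (Suc r) A"
  shows "\<forall>e L. init_lab A e = Some L \<longrightarrow> Qinv n A T e L"
proof (intro allI impI)
  fix e L assume h: "init_lab A e = Some L"
  have len: "length (Xword A) = n" using len_concat[OF assms]
    by (simp add: Xword_def Let_def)
  from map_of_SomeD[OF h[unfolded init_lab_def]] obtain i where
    "i < length (Xword A)" "e = path_edge (Xword A) i" "L = {concat A ! i}" by auto
  then show "Qinv n A T e L" using len unfolding Qinv_def same_strip_def by auto
qed

theorem lemma3p3:
  fixes n r :: nat and A :: "nat list list" and T :: "tile set"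
    and lab :: "edge \<Rightarrow> label option" and e :: edge and L :: label
  assumes "r \<le> n"
    and "assemblee (Suc n) (Suc r) A"
    and "is_tiling (Xword A) T"
    and "(fe_step T)\<^sup>*\<^sup>* (init_lab A) lab"
    and "lab e = Some L" and "L \<noteq> {}"
  shows "\<exists>i < n. concat A ! i = Max L \<and> same_strip T (path_edge (Xword A) i) e"
proof -
  have "\<forall>e L. lab e = Some L \<longrightarrow> Qinv n A T e L"
    using assms(4)
  proof (induction rule: rtranclp_induct)
    case base
    then show ?case using init_inv[OF assms(2)] .
  next
    case (step y z)
    then show ?case using step_inv by blast
  qed
  then show ?thesis using assms(5,6) unfolding Qinv_def by blast
qed

end
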